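(* The line-incompatibility graph of a trivially-perfect graph is a cograph.
   Context: All graphs are finite, simple and undirected. The line-incompatibility graph $\widehat{G}$ of $G$ has one node for each edge of $G$, and two nodes are adjacent iff the corresponding edges are of the form $\{u,v\},\{v,w\}$ with $\{u,w\}\notin E(G)$ (their endpoints induce a path on three vertices in $G$). A graph $G$ is trivially-perfect if for each induced subgraph $H$ of $G$ the number of maximal cliques of $H$ equals the maximum size of an independent set of $H$; equivalently (a known characterization), $G$ contains neither an induced path on four vertices ($P_4$) nor an induced cycle on four vertices ($C_4$). A cograph is a graph with no induced $P_4$. *)

theory Defs
  imports Main
begin

definition simple_graph :: "'a set \<Rightarrow> 'a set set \<Rightarrow> bool" where
  "simple_graph V E \<longleftrightarrow> finite V \<and> (\<forall>e\<in>E. e \<subseteq> V \<and> card e = 2)"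

definition is_clique :: "'a set set \<Rightarrow> 'a set \<Rightarrow> bool" where
  "is_clique E C \<longleftrightarrow> (\<forall>x\<in>C. \<forall>y\<in>C. x \<noteq> y \<longrightarrow> {x, y} \<in> E)"

definition is_indep :: "'a set set \<Rightarrow> 'a set \<Rightarrow> bool" where
  "is_indep E I \<longleftrightarrow> (\<forall>x\<in>I. \<forall>y\<in>I. x \<noteq> y \<longrightarrow> {x, y} \<notin> E)"

definition maximal_cliques :: "'a set set \<Rightarrow> 'a set \<Rightarrow> 'a set set" where
  "maximal_cliques E S = {C. C \<subseteq> S \<and> is_clique E C \<and>
      (\<forall>D. D \<subseteq> S \<and> is_clique E D \<and> C \<subseteq> D \<longrightarrow> D = C)}"

definition indep_number :: "'a set set \<Rightarrow> 'a set \<Rightarrow> nat" where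
  "indep_number E S = Max (card ` {I. I \<subseteq> S \<and> is_indep E I})"

definition trivially_perfect :: "'a set \<Rightarrow> 'a set set \<Rightarrow> bool" where
  "trivially_perfect V E \<longleftrightarrow>
     (\<forall>S. S \<subseteq> V \<and> S \<noteq> {} \<longrightarrow> card (maximal_cliques E S) = indep_number E S)"

definition induced_P4 :: "'a set \<Rightarrow> 'a set set \<Rightarrow> 'a \<Rightarrow> 'a \<Rightarrow> 'a \<Rightarrow> 'a \<Rightarrow> bool" where
  "induced_P4 V E a b c d \<longleftrightarrow> a \<in> V \<and> b \<in> V \<and> c \<in> V \<and> d \<in> V \<and>
     distinct [a, b, c, d] \<and> {a, b} \<in> E \<and> {b, c} \<in> E \<and> {c, d} \<in> E \<and>
     {a, c} \<notin> E \<and> {b, d} \<notin> E \<and> {a, d} \<notin> E"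

definition cograph :: "'a set \<Rightarrow> 'a set set \<Rightarrow> bool" where
  "cograph V E \<longleftrightarrow> (\<nexists>a b c d. induced_P4 V E a b c d)"

definition line_incomp_edges :: "'a set set \<Rightarrow> 'a set set set" where
  "line_incomp_edges E = {{e, f} | e f. e \<in> E \<and> f \<in> E \<and>
     (\<exists>u v w. u \<noteq> w \<and> e = {u, v} \<and> f = {v, w} \<and> {u, w} \<notin> E)}"

end

theory Submission
  imports Defs
begin

lemma card_le2: "I \<subseteq> {x, y} \<Longrightarrow> card I \<le> 2"
proof -
  assume h: "I \<subseteq> {x, y}"
  have "card I \<le> card {x,y}" by (rule card_mono) (auto simp: h)
  also have "card {x,y} \<le> 2" by (simp add: card_insert_if)
  finally show ?thesis .
qed

lemma tp_common:
  assumes sg: "simple_graph V E" and tp: "trivially_perfect V E"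
    and S: "S = {a,b,c,d}" and ab: "{a,b} \<in> E" and cd: "{c,d} \<in> E"
    and M: "M \<subseteq> maximal_cliques E S" and cM: "card M > 2"
    and ind: "\<And>I. I \<subseteq> S \<Longrightarrow> is_indep E I \<Longrightarrow> card I \<le> 2"
  shows False
proof -
  have "a \<in> V" "b \<in> V" "c \<in> V" "d \<in> V" using sg ab cd unfolding simple_graph_def by auto
  hence SV: "S \<subseteq> V" "S \<noteq> {}" using S by auto
  hence eq: "card (maximal_cliques E S) = indep_number E S" using tp unfolding trivially_perfect_def by blast
  have fS: "finite S" using S by simp
  have fm: "finite (maximal_cliques E S)"
    by (rule finite_subset[of _ "Pow S"]) (auto simp: maximal_cliques_def fS)
  have "card M \<le> card (maximal_cliques E S)" using card_mono[OF fm M] .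
  moreover have "indep_number E S \<le> 2"
  proof -
    have f: "finite {I. I \<subseteq> S \<and> is_indep E I}"
      by (rule finite_subset[of _ "Pow S"]) (auto simp: fS)
    have ne: "{} \<in> {I. I \<subseteq> S \<and> is_indep E I}" by (simp add: is_indep_def)
    show ?thesis unfolding indep_number_def
      using f ne ind by (subst Max_le_iff) auto
  qed
  ultimately show False using eq cM by linarith
qed

lemma pair_maxclq:
  assumes "{x,y} \<in> E" "x \<in> S" "y \<in> S"
    and "\<And>z. z \<in> S \<Longrightarrow> z \<noteq> x \<Longrightarrow> z \<noteq> y \<Longrightarrow> {x,z} \<notin> E \<or> {y,z} \<notin> E"
  shows "{x,y} \<in> maximal_cliques E S"
proof -
  have yx: "{y,x} \<in> E" using assms(1) by (simp add: insert_commute)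
  have cl: "is_clique E {x,y}" unfolding is_clique_def using assms(1) yx by auto
  have "D = {x,y}" if "D \<subseteq> S" "is_clique E D" "{x,y} \<subseteq> D" for D
  proof -
    have "z = x \<or> z = y" if "z \<in> D" for z
    proof (rule ccontr)
      assume n: "\<not> (z = x \<or> z = y)"
      have "x \<in> D" "y \<in> D" using \<open>{x,y} \<subseteq> D\<close> by auto
      hence "{x,z} \<in> E" "{y,z} \<in> E" using \<open>is_clique E D\<close> \<open>z \<in> D\<close> n unfolding is_clique_def by auto
      thus False using assms(4)[of z] \<open>D \<subseteq> S\<close> \<open>z \<in> D\<close> n by blast
    qed
    thus ?thesis using \<open>{x,y} \<subseteq> D\<close> by blast
  qed
  thus ?thesis unfolding maximal_cliques_def using cl assms(2,3) by blast
qed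

lemma indep_excl: "is_indep E I \<Longrightarrow> {x,y} \<in> E \<Longrightarrow> x \<noteq> y \<Longrightarrow> x \<in> I \<Longrightarrow> y \<notin> I"
  unfolding is_indep_def by blast

lemma tp_noP4:
  assumes sg: "simple_graph V E" and tp: "trivially_perfect V E"
    and dist: "distinct [a,b,c,d]" and ab: "{a,b} \<in> E" and bc: "{b,c} \<in> E" and cd: "{c,d} \<in> E"
    and nac: "{a,c} \<notin> E" and nbd: "{b,d} \<notin> E" and nad: "{a,d} \<notin> E"
  shows False
proof -
  define S where "S = {a,b,c,d}"
  have ins: "{c,a} \<notin> E" "{d,b} \<notin> E" "{d,a} \<notin> E" "{b,a} \<in> E" "{c,b} \<in> E" "{d,c} \<in> E"
    using nac nbd nad ab bc cd by (simp_all add: insert_commute)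
  have M: "{{a,b},{b,c},{c,d}} \<subseteq> maximal_cliques E S"
  proof -
    have "{a,b} \<in> maximal_cliques E S" by (rule pair_maxclq) (use ab nac nad ins dist in \<open>auto simp: S_def\<close>)
    moreover have "{b,c} \<in> maximal_cliques E S" by (rule pair_maxclq) (use bc nbd ins dist in \<open>auto simp: S_def\<close>)
    moreover have "{c,d} \<in> maximal_cliques E S" by (rule pair_maxclq) (use cd nac nbd ins dist in \<open>auto simp: S_def\<close>)
    ultimately show ?thesis by blast
  qed
  have cM: "card {{a,b},{b,c},{c,d}} > 2"
  proof -
    have m: "a \<notin> {b,c}" "a \<notin> {c,d}" "b \<notin> {c,d}" using dist by auto
    have n1: "{a,b} \<noteq> {b,c}" using m(1) by (metis insertI1)
    have n2: "{a,b} \<noteq> {c,d}" using m(2) by (metis insertI1)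
    have n3: "{b,c} \<noteq> {c,d}" using m(3) by (metis insertI1)
    have i1: "{a,b} \<notin> {{b,c},{c,d}}" using n1 n2 by blast
    have i2: "{b,c} \<notin> {{c,d}}" using n3 by blast
    have "card {{a,b},{b,c},{c,d}} = Suc (card {{b,c},{c,d}})"
      by (rule card_insert_disjoint[OF _ i1]) simp
    also have "card {{b,c},{c,d}} = Suc (card {{c,d}})"
      by (rule card_insert_disjoint[OF _ i2]) simp
    finally show ?thesis by simp
  qed
  have ind: "card I \<le> 2" if "I \<subseteq> S" "is_indep E I" for I
  proof -
    note e = indep_excl[OF that(2)]
    have d: "a \<noteq> b" "b \<noteq> c" "c \<noteq> d" "b \<noteq> a" "c \<noteq> b" "d \<noteq> c" using dist by auto
    have x: "a \<in> I \<Longrightarrow> b \<notin> I" "b \<in> I \<Longrightarrow> c \<notin> I" "c \<in> I \<Longrightarrow> d \<notin> I"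
      using e[OF ab d(1)] e[OF bc d(2)] e[OF cd d(3)] by auto
    have "I \<subseteq> {a,c} \<or> I \<subseteq> {a,d} \<or> I \<subseteq> {b,d} \<or> I \<subseteq> {c,d}"
    proof (cases "a \<in> I")
      case True
      hence nb: "b \<notin> I" using x(1) by blast
      show ?thesis
      proof (cases "c \<in> I")
        case True
        hence "d \<notin> I" using x(3) by blast
        hence "I \<subseteq> {a,c}" using nb that(1) unfolding S_def by blast
        thus ?thesis by blast
      next
        case False
        hence "I \<subseteq> {a,d}" using nb that(1) unfolding S_def by blast
        thus ?thesis by blast
      qed
    next
      case na: False
      show ?thesis
      proof (cases "b \<in> I")
        case True
        hence "c \<notin> I" using x(2) by blast
        hence "I \<subseteq> {b,d}" using na that(1) unfolding S_def by blast
        thus ?thesis by blast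
      next
        case False
        hence "I \<subseteq> {c,d}" using na that(1) unfolding S_def by blast
        thus ?thesis by blast
      qed
    qed
    thus ?thesis by (elim disjE) (rule card_le2, assumption)+
  qed
  show False using tp_common[OF sg tp S_def ab cd M cM ind] .
qed

lemma card3:
  assumes "distinct [a,b,c,d]"
  shows "card {{a,b},{b,c},{c,d}} > 2"
proof -
  have m: "a \<notin> {b,c}" "a \<notin> {c,d}" "b \<notin> {c,d}" using assms by auto
  have n1: "{a,b} \<noteq> {b,c}" using m(1) by (metis insertI1)
  have n2: "{a,b} \<noteq> {c,d}" using m(2) by (metis insertI1)
  have n3: "{b,c} \<noteq> {c,d}" using m(3) by (metis insertI1)
  have i1: "{a,b} \<notin> {{b,c},{c,d}}" using n1 n2 by blast
  have i2: "{b,c} \<notin> {{c,d}}" using n3 by blast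
  have "card {{a,b},{b,c},{c,d}} = Suc (card {{b,c},{c,d}})"
    by (rule card_insert_disjoint[OF _ i1]) simp
  also have "card {{b,c},{c,d}} = Suc (card {{c,d}})"
    by (rule card_insert_disjoint[OF _ i2]) simp
  finally show ?thesis by simp
qed

lemma tp_noC4:
  assumes sg: "simple_graph V E" and tp: "trivially_perfect V E"
    and dist: "distinct [a,b,c,d]" and ab: "{a,b} \<in> E" and bc: "{b,c} \<in> E" and cd: "{c,d} \<in> E"
    and da: "{a,d} \<in> E" and nac: "{a,c} \<notin> E" and nbd: "{b,d} \<notin> E"
  shows False
proof -
  define S where "S = {a,b,c,d}"
  have ins: "{c,a} \<notin> E" "{d,b} \<notin> E" "{d,a} \<in> E" "{b,a} \<in> E" "{c,b} \<in> E" "{d,c} \<in> E"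
    using nac nbd da ab bc cd by (simp_all add: insert_commute)
  have M: "{{a,b},{b,c},{c,d}} \<subseteq> maximal_cliques E S"
  proof -
    have "{a,b} \<in> maximal_cliques E S" by (rule pair_maxclq) (use ab nac nbd ins dist in \<open>auto simp: S_def\<close>)
    moreover have "{b,c} \<in> maximal_cliques E S" by (rule pair_maxclq) (use bc nac nbd ins dist in \<open>auto simp: S_def\<close>)
    moreover have "{c,d} \<in> maximal_cliques E S" by (rule pair_maxclq) (use cd nac nbd ins dist in \<open>auto simp: S_def\<close>)
    ultimately show ?thesis by blast
  qed
  have cM: "card {{a,b},{b,c},{c,d}} > 2" using card3[OF dist] .
  have ind: "card I \<le> 2" if "I \<subseteq> S" "is_indep E I" for I
  proof -
    note e = indep_excl[OF that(2)]
    have d: "a \<noteq> b" "b \<noteq> c" "c \<noteq> d" "a \<noteq> d" using dist by auto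
    have x: "a \<in> I \<Longrightarrow> b \<notin> I" "b \<in> I \<Longrightarrow> c \<notin> I" "c \<in> I \<Longrightarrow> d \<notin> I" "a \<in> I \<Longrightarrow> d \<notin> I"
      using e[OF ab d(1)] e[OF bc d(2)] e[OF cd d(3)] e[OF da d(4)] by auto
    have "I \<subseteq> {a,c} \<or> I \<subseteq> {b,d} \<or> I \<subseteq> {c,d}"
    proof (cases "a \<in> I")
      case True
      hence "b \<notin> I" "d \<notin> I" using x by blast+
      hence "I \<subseteq> {a,c}" using that(1) unfolding S_def by blast
      thus ?thesis by blast
    next
      case na: False
      show ?thesis
      proof (cases "b \<in> I")
        case True
        hence "c \<notin> I" using x(2) by blast
        hence "I \<subseteq> {b,d}" using na that(1) unfolding S_def by blast
        thus ?thesis by blast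
      next
        case False
        hence "I \<subseteq> {c,d}" using na that(1) unfolding S_def by blast
        thus ?thesis by blast
      qed
    qed
    thus ?thesis by (elim disjE) (rule card_le2, assumption)+
  qed
  show False using tp_common[OF sg tp S_def ab cd M cM ind] .
qed

lemma no_loop: "simple_graph V E \<Longrightarrow> {x,x} \<in> E \<Longrightarrow> False"
  unfolding simple_graph_def by fastforce

lemma L_hub:
  assumes "{e,f} \<in> line_incomp_edges E"
  shows "\<exists>x a c. e = {x,a} \<and> f = {x,c} \<and> a \<noteq> c \<and> {a,c} \<notin> E \<and> e \<in> E \<and> f \<in> E"
proof -
  have "\<exists>e' f'. {e,f} = {e',f'} \<and> e' \<in> E \<and> f' \<in> E \<and> (\<exists>u v w. u \<noteq> w \<and> e' = {u,v} \<and> f' = {v,w} \<and> {u,w} \<notin> E)"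
    using assms unfolding line_incomp_edges_def by (simp only: mem_Collect_eq)
  then obtain e' f' u v w where h: "{e,f} = {e',f'}" "e' \<in> E" "f' \<in> E" "u \<noteq> w" "e' = {u,v}" "f' = {v,w}" "{u,w} \<notin> E"
    by (elim exE conjE) (rule that, assumption+)
  have vu: "{u,v} = {v,u}" and wu: "{w,u} = {u,w}" by (rule insert_commute)+
  from h(1) have "(e = e' \<and> f = f') \<or> (e = f' \<and> f = e')" by (simp add: doubleton_eq_iff)
  thus ?thesis
  proof
    assume c: "e = e' \<and> f = f'"
    have "e = {v,u}" "f = {v,w}" "e \<in> E" "f \<in> E" using c h vu by simp_all
    thus ?thesis using h(4,7) by blast
  next
    assume c: "e = f' \<and> f = e'"
    have "e = {v,w}" "f = {v,u}" "e \<in> E" "f \<in> E" "{w,u} \<notin> E" "w \<noteq> u" using c h vu wu by simp_all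
    thus ?thesis by blast
  qed
qed

lemma L_intro:
  assumes "{x,a} \<in> E" "{x,c} \<in> E" "a \<noteq> c" "{a,c} \<notin> E"
  shows "{{x,a},{x,c}} \<in> line_incomp_edges E"
proof -
  have xa: "{x,a} = {a,x}" by (rule insert_commute)
  have "{x,a} \<in> E \<and> {x,c} \<in> E \<and> (\<exists>u v w. u \<noteq> w \<and> {x,a} = {u,v} \<and> {x,c} = {v,w} \<and> {u,w} \<notin> E)"
    using assms xa by (intro conjI exI[of _ a] exI[of _ x] exI[of _ c]) simp_all
  hence "\<exists>e f. {{x,a},{x,c}} = {e,f} \<and> e \<in> E \<and> f \<in> E \<and> (\<exists>u v w. u \<noteq> w \<and> e = {u,v} \<and> f = {v,w} \<and> {u,w} \<notin> E)"
    by (intro exI[of _ "{x,a}"] exI[of _ "{x,c}"]) simp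
  thus ?thesis unfolding line_incomp_edges_def by (simp only: mem_Collect_eq)
qed

lemma same_hub: "{x,p} = {x,q} \<Longrightarrow> p = q"
  by (metis insert_absorb2 insert_iff doubleton_eq_iff)

lemma hub_eq:
  assumes sg: "simple_graph V E" and tp: "trivially_perfect V E"
    and e1: "{x,a} \<in> E" and e2: "{x,c} \<in> E" and ac: "a \<noteq> c" "{a,c} \<notin> E"
    and eq: "{x,c} = {y,b}" and e3: "{y,d} \<in> E" and bd: "b \<noteq> d" "{b,d} \<notin> E"
  shows "x = y"
proof (rule ccontr)
  assume xy: "x \<noteq> y"
  from eq xy have cy: "c = y" and bx: "b = x" by (auto simp: doubleton_eq_iff)
  have xyE: "{x,y} \<in> E" using e2 cy by simp
  have nay: "{a,y} \<notin> E" using ac cy by simp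
  have nxd: "{x,d} \<notin> E" using bd bx by simp
  have ax: "a \<noteq> x" using e1 no_loop[OF sg] by (metis insert_absorb2)
  have dy: "d \<noteq> y" using e3 no_loop[OF sg] by (metis insert_absorb2)
  have ay: "a \<noteq> y" using ac cy by simp
  have dx: "d \<noteq> x" using bd bx by simp
  have ad: "a \<noteq> d"
  proof
    assume "a = d"
    hence "{a,y} \<in> E" using e3 by (simp add: insert_commute)
    thus False using nay by simp
  qed
  have dist: "distinct [a,x,y,d]" using ax dy ay dx ad xy by auto
  have ax': "{a,x} \<in> E" using e1 by (simp add: insert_commute)
  have nxd': "{x,d} \<notin> E" using nxd .
  show False
  proof (cases "{a,d} \<in> E")
    case True
    show False by (rule tp_noC4[OF sg tp dist ax' xyE e3 True nay nxd])
  next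
    case False
    show False by (rule tp_noP4[OF sg tp dist ax' xyE e3 nay nxd False])
  qed
qed

theorem theorem12:
  fixes V :: "'a set" and E :: "'a set set"
  assumes "simple_graph V E"
    and "trivially_perfect V E"
  shows "cograph E (line_incomp_edges E)"
  unfolding cograph_def
proof
  note sg = assms(1) and tp = assms(2)
  assume "\<exists>e1 e2 e3 e4. induced_P4 E (line_incomp_edges E) e1 e2 e3 e4"
  then obtain e1 e2 e3 e4 where P: "induced_P4 E (line_incomp_edges E) e1 e2 e3 e4" by blast
  have D: "distinct [e1,e2,e3,e4]" and L12: "{e1,e2} \<in> line_incomp_edges E"
    and L23: "{e2,e3} \<in> line_incomp_edges E" and L34: "{e3,e4} \<in> line_incomp_edges E"
    and N13: "{e1,e3} \<notin> line_incomp_edges E" and N24: "{e2,e4} \<notin> line_incomp_edges E"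
    and N14: "{e1,e4} \<notin> line_incomp_edges E"
    using P unfolding induced_P4_def by simp_all
  obtain x a1 a2 where h1: "e1 = {x,a1}" "e2 = {x,a2}" "a1 \<noteq> a2" "{a1,a2} \<notin> E" "e1 \<in> E" "e2 \<in> E"
    using L_hub[OF L12] by (elim exE conjE) (rule that, assumption+)
  obtain y b2 b3 where h2: "e2 = {y,b2}" "e3 = {y,b3}" "b2 \<noteq> b3" "{b2,b3} \<notin> E" "e3 \<in> E"
    using L_hub[OF L23] by (elim exE conjE) (rule that, assumption+)
  obtain z c3 c4 where h3: "e3 = {z,c3}" "e4 = {z,c4}" "c3 \<noteq> c4" "{c3,c4} \<notin> E" "e4 \<in> E"
    using L_hub[OF L34] by (elim exE conjE) (rule that, assumption+)
  have xy: "x = y"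
    by (rule hub_eq[OF sg tp, of x a1 a2 y b2 b3]) (use h1 h2 in simp_all)
  have yz: "y = z"
    by (rule hub_eq[OF sg tp, of y b2 b3 z c3 c4]) (use h1 h2 h3 in simp_all)
  have a2b2: "a2 = b2" using h1(2) h2(1) xy same_hub by metis
  have b3c3: "b3 = c3" using h2(2) h3(1) yz same_hub by metis
  have E3: "e3 = {x,b3}" using h2(2) xy by simp
  have E4: "e4 = {x,c4}" using h3(2) xy yz by simp
  have n12: "{a1,a2} \<notin> E" using h1(4) .
  have n23: "{a2,b3} \<notin> E" using h2(4) a2b2 by simp
  have n34: "{b3,c4} \<notin> E" using h3(4) b3c3 by simp
  have d12: "a1 \<noteq> a2" using h1(3) .
  have d23: "a2 \<noteq> b3" using h2(3) a2b2 by simp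
  have d34: "b3 \<noteq> c4" using h3(3) b3c3 by simp
  have d13: "a1 \<noteq> b3" using D h1(1) E3 by auto
  have d24: "a2 \<noteq> c4" using D h1(2) E4 by auto
  have d14: "a1 \<noteq> c4" using D h1(1) E4 by auto
  have x1: "{x,a1} \<in> E" and x2: "{x,a2} \<in> E" using h1 by simp_all
  have x3: "{x,b3} \<in> E" using h2(5) E3 by simp
  have x4: "{x,c4} \<in> E" using h3(5) E4 by simp
  have y13: "{a1,b3} \<in> E"
  proof (rule ccontr)
    assume "{a1,b3} \<notin> E"
    from L_intro[OF x1 x3 d13 this] have "{e1,e3} \<in> line_incomp_edges E" using h1(1) E3 by simp
    thus False using N13 by simp
  qed
  have y24: "{a2,c4} \<in> E"
  proof (rule ccontr)
    assume "{a2,c4} \<notin> E"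
    from L_intro[OF x2 x4 d24 this] have "{e2,e4} \<in> line_incomp_edges E" using h1(2) E4 by simp
    thus False using N24 by simp
  qed
  have y14: "{a1,c4} \<in> E"
  proof (rule ccontr)
    assume "{a1,c4} \<notin> E"
    from L_intro[OF x1 x4 d14 this] have "{e1,e4} \<in> line_incomp_edges E" using h1(1) E4 by simp
    thus False using N14 by simp
  qed
  have dist: "distinct [a2,c4,a1,b3]" using d12 d23 d34 d13 d24 d14 by auto
  have y41: "{c4,a1} \<in> E" using y14 by (simp add: insert_commute)
  have n21: "{a2,a1} \<notin> E" using n12 by (simp add: insert_commute)
  have n43: "{c4,b3} \<notin> E" using n34 by (simp add: insert_commute)
  show False by (rule tp_noP4[OF sg tp dist y24 y41 y13 n21 n43 n23])
qed

end
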